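(* Let $X_1,X_2$ be forests and $A\subset X=X_1\times X_2$. Let $A_1$ be the set of points $x\in X$ such that $x=y\vee z$ for some $c$-comparable $y,z\in A$, and let $A_2$ be the set of $t=(t_1,t_2)\in X$ such that $t_1\le x_1$ and $t_2\le x_2$ for some $x=(x_1,x_2)\in A_1$. Then $A_2$ equals the c.h-envelope $\widehat A$ of $A$.
   Context: A partially ordered set $Y$ is a forest if for every $y_0\in Y$ the set $\{y\ge y_0\}$ is finite and totally ordered. For forests $X_1,\dots,X_n$ and $X=X_1\times\cdots\times X_n$, write $y\le x$ if $y_i\le x_i$ for all $i$. A subset $A\subset X$ is hereditary if $x\in A$ and $y\le x$ imply $y\in A$. Points $x,y\in X$ are $c$-comparable if for each $i$, $x_i$ and $y_i$ are comparable; then $x\vee y=(\max(x_i,y_i))_i$. $A$ is concave if $x\vee y\in A$ whenever $x,y\in A$ are $c$-comparable. The c.h-envelope $\widehat A$ of $A$ is the smallest concave hereditary subset of $X$ containing $A$. *)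

theory Defs
  imports Main
begin

definition forest :: "'a set \<Rightarrow> ('a \<Rightarrow> 'a \<Rightarrow> bool) \<Rightarrow> bool" where
  "forest Y le \<longleftrightarrow>
     (\<forall>x\<in>Y. le x x) \<and>
     (\<forall>x\<in>Y. \<forall>y\<in>Y. \<forall>z\<in>Y. le x y \<and> le y z \<longrightarrow> le x z) \<and>
     (\<forall>x\<in>Y. \<forall>y\<in>Y. le x y \<and> le y x \<longrightarrow> x = y) \<and>
     (\<forall>y0\<in>Y. finite {y\<in>Y. le y0 y} \<and>
        (\<forall>y\<in>{y\<in>Y. le y0 y}. \<forall>z\<in>{y\<in>Y. le y0 y}. le y z \<or> le z y))"

definition prod_le :: "('a \<Rightarrow> 'a \<Rightarrow> bool) \<Rightarrow> ('b \<Rightarrow> 'b \<Rightarrow> bool) \<Rightarrow> 'a \<times> 'b \<Rightarrow> 'a \<times> 'b \<Rightarrow> bool" where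
  "prod_le le1 le2 y x \<longleftrightarrow> le1 (fst y) (fst x) \<and> le2 (snd y) (snd x)"

definition comparable :: "('a \<Rightarrow> 'a \<Rightarrow> bool) \<Rightarrow> 'a \<Rightarrow> 'a \<Rightarrow> bool" where
  "comparable le a b \<longleftrightarrow> le a b \<or> le b a"

definition c_comparable :: "('a \<Rightarrow> 'a \<Rightarrow> bool) \<Rightarrow> ('b \<Rightarrow> 'b \<Rightarrow> bool) \<Rightarrow> 'a \<times> 'b \<Rightarrow> 'a \<times> 'b \<Rightarrow> bool" where
  "c_comparable le1 le2 x y \<longleftrightarrow> comparable le1 (fst x) (fst y) \<and> comparable le2 (snd x) (snd y)"

definition omax :: "('a \<Rightarrow> 'a \<Rightarrow> bool) \<Rightarrow> 'a \<Rightarrow> 'a \<Rightarrow> 'a" where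
  "omax le a b = (if le a b then b else a)"

definition cjoin :: "('a \<Rightarrow> 'a \<Rightarrow> bool) \<Rightarrow> ('b \<Rightarrow> 'b \<Rightarrow> bool) \<Rightarrow> 'a \<times> 'b \<Rightarrow> 'a \<times> 'b \<Rightarrow> 'a \<times> 'b" where
  "cjoin le1 le2 x y = (omax le1 (fst x) (fst y), omax le2 (snd x) (snd y))"

definition hereditary :: "('a \<times> 'b) set \<Rightarrow> ('a \<Rightarrow> 'a \<Rightarrow> bool) \<Rightarrow> ('b \<Rightarrow> 'b \<Rightarrow> bool) \<Rightarrow> ('a \<times> 'b) set \<Rightarrow> bool" where
  "hereditary X le1 le2 A \<longleftrightarrow> A \<subseteq> X \<and> (\<forall>x\<in>A. \<forall>y\<in>X. prod_le le1 le2 y x \<longrightarrow> y \<in> A)"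

definition concave :: "('a \<Rightarrow> 'a \<Rightarrow> bool) \<Rightarrow> ('b \<Rightarrow> 'b \<Rightarrow> bool) \<Rightarrow> ('a \<times> 'b) set \<Rightarrow> bool" where
  "concave le1 le2 A \<longleftrightarrow> (\<forall>x\<in>A. \<forall>y\<in>A. c_comparable le1 le2 x y \<longrightarrow> cjoin le1 le2 x y \<in> A)"

definition ch_envelope :: "('a \<times> 'b) set \<Rightarrow> ('a \<Rightarrow> 'a \<Rightarrow> bool) \<Rightarrow> ('b \<Rightarrow> 'b \<Rightarrow> bool) \<Rightarrow> ('a \<times> 'b) set \<Rightarrow> ('a \<times> 'b) set" where
  "ch_envelope X le1 le2 A = \<Inter>{B. B \<subseteq> X \<and> hereditary X le1 le2 B \<and> concave le1 le2 B \<and> A \<subseteq> B}"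

end

theory Submission
  imports Defs
begin

lemma forest_refl: "forest Y le \<Longrightarrow> x \<in> Y \<Longrightarrow> le x x"
  unfolding forest_def by blast

lemma forest_trans: "forest Y le \<Longrightarrow> x \<in> Y \<Longrightarrow> y \<in> Y \<Longrightarrow> z \<in> Y \<Longrightarrow> le x y \<Longrightarrow> le y z \<Longrightarrow> le x z"
  unfolding forest_def by blast

lemma forest_antisym: "forest Y le \<Longrightarrow> x \<in> Y \<Longrightarrow> y \<in> Y \<Longrightarrow> le x y \<Longrightarrow> le y x \<Longrightarrow> x = y"
  unfolding forest_def by blast

lemma forest_chain: "forest Y le \<Longrightarrow> a \<in> Y \<Longrightarrow> y \<in> Y \<Longrightarrow> z \<in> Y \<Longrightarrow> le a y \<Longrightarrow> le a z \<Longrightarrow> le y z \<or> le z y"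
  unfolding forest_def by blast

lemma omax_cases: "omax le a b = a \<or> omax le a b = b"
  unfolding omax_def by auto

lemma omax_in: "a \<in> Y \<Longrightarrow> b \<in> Y \<Longrightarrow> omax le a b \<in> Y"
  unfolding omax_def by auto

lemma omax_ge:
  assumes "forest Y le" "a \<in> Y" "b \<in> Y" "comparable le a b"
  shows "le a (omax le a b) \<and> le b (omax le a b)"
  using assms forest_refl[OF assms(1)] unfolding omax_def comparable_def by auto

lemma omax_same:
  assumes "forest Y le" "a \<in> Y" "b \<in> Y" "le b a"
  shows "omax le a b = a"
  using assms forest_antisym[OF assms(1)] unfolding omax_def by auto

lemma comp_above:
  assumes "forest Y le" "t \<in> Y" "s \<in> Y" "x \<in> Y" "x' \<in> Y"
    "comparable le t s" "le t x" "le s x'"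
  shows "comparable le x x'"
proof -
  from assms(6) have "le t s \<or> le s t" unfolding comparable_def .
  then show ?thesis
  proof
    assume "le t s"
    then have "le t x'" using forest_trans[OF assms(1)] assms by blast
    then show ?thesis using forest_chain[OF assms(1) assms(2) assms(4) assms(5)] assms(7)
      unfolding comparable_def by blast
  next
    assume "le s t"
    then have "le s x" using forest_trans[OF assms(1)] assms by blast
    then show ?thesis using forest_chain[OF assms(1) assms(3) assms(4) assms(5)] assms(8)
      unfolding comparable_def by blast
  qed
qed

lemma top4:
  assumes F: "forest Y le" and Y: "a \<in> Y" "b \<in> Y" "c \<in> Y" "d \<in> Y"
    and "comparable le a b" "comparable le c d"
    and "comparable le (omax le a b) (omax le c d)"
  shows "\<exists>m \<in> {a,b,c,d}. le a m \<and> le b m \<and> le c m \<and> le d m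
     \<and> le (omax le a b) m \<and> le (omax le c d) m"
proof -
  let ?m = "omax le a b" and ?n = "omax le c d"
  have m: "?m \<in> {a,b}" "?n \<in> {c,d}" using omax_cases[of le a b] omax_cases[of le c d] by auto
  have mY: "?m \<in> Y" "?n \<in> Y" using m Y by auto
  have g1: "le a ?m \<and> le b ?m" using omax_ge[OF F Y(1,2) assms(6)] .
  have g2: "le c ?n \<and> le d ?n" using omax_ge[OF F Y(3,4) assms(7)] .
  show ?thesis
  proof (cases "le ?m ?n")
    case True
    have "le a ?n" "le b ?n" using forest_trans[OF F Y(1) mY(1) mY(2)] forest_trans[OF F Y(2) mY(1) mY(2)] g1 True by auto
    moreover have "?n \<in> {a,b,c,d}" using m(2) by blast
    ultimately show ?thesis using g2 True forest_refl[OF F mY(2)] by blast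
  next
    case False
    then have T: "le ?n ?m" using assms(8) unfolding comparable_def by blast
    have "le c ?m" "le d ?m" using forest_trans[OF F Y(3) mY(2) mY(1)] forest_trans[OF F Y(4) mY(2) mY(1)] g2 T by auto
    moreover have "?m \<in> {a,b,c,d}" using m(1) by blast
    ultimately show ?thesis using g1 T forest_refl[OF F mY(1)] by blast
  qed
qed

theorem mainTheorem3:
  fixes X1 :: "'a set" and le1 :: "'a \<Rightarrow> 'a \<Rightarrow> bool"
    and X2 :: "'b set" and le2 :: "'b \<Rightarrow> 'b \<Rightarrow> bool"
    and A :: "('a \<times> 'b) set"
  assumes "forest X1 le1" and "forest X2 le2"
    and "A \<subseteq> X1 \<times> X2"
    and "A1 = {x \<in> X1 \<times> X2. \<exists>y\<in>A. \<exists>z\<in>A. c_comparable le1 le2 y z \<and> x = cjoin le1 le2 y z}"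
    and "A2 = {t \<in> X1 \<times> X2. \<exists>x\<in>A1. le1 (fst t) (fst x) \<and> le2 (snd t) (snd x)}"
  shows "A2 = ch_envelope (X1 \<times> X2) le1 le2 A"
proof
  note F1 = assms(1) and F2 = assms(2)
  have A1X: "A1 \<subseteq> X1 \<times> X2" using assms(4) by auto
  show "A2 \<subseteq> ch_envelope (X1 \<times> X2) le1 le2 A"
  proof
    fix t assume t: "t \<in> A2"
    show "t \<in> ch_envelope (X1 \<times> X2) le1 le2 A"
      unfolding ch_envelope_def
    proof
      fix B assume "B \<in> {B. B \<subseteq> X1 \<times> X2 \<and> hereditary (X1 \<times> X2) le1 le2 B \<and> concave le1 le2 B \<and> A \<subseteq> B}"
      then have B: "hereditary (X1 \<times> X2) le1 le2 B" "concave le1 le2 B" "A \<subseteq> B" by auto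
      have "A1 \<subseteq> B"
      proof
        fix w assume "w \<in> A1"
        then obtain y z where "y \<in> A" "z \<in> A" "c_comparable le1 le2 y z" "w = cjoin le1 le2 y z"
          unfolding assms(4) by blast
        then show "w \<in> B" using B(2,3) unfolding concave_def by blast
      qed
      then show "t \<in> B" using t B(1) unfolding assms(5) hereditary_def prod_le_def by blast
    qed
  qed
  have AA1: "A \<subseteq> A1"
  proof
    fix x assume x: "x \<in> A"
    have xX: "x \<in> X1 \<times> X2" using x assms(3) by auto
    have "c_comparable le1 le2 x x" unfolding c_comparable_def comparable_def
      using xX forest_refl[OF F1] forest_refl[OF F2] by auto
    moreover have "x = cjoin le1 le2 x x" unfolding cjoin_def omax_def by simp
    ultimately show "x \<in> A1" unfolding assms(4) using x xX by blast
  qed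
  have AA2: "A \<subseteq> A2"
  proof
    fix x assume x: "x \<in> A"
    have xX: "x \<in> X1 \<times> X2" using x assms(3) by auto
    have "x \<in> A1" using AA1 x by blast
    moreover have "le1 (fst x) (fst x)" "le2 (snd x) (snd x)"
      using xX forest_refl[OF F1] forest_refl[OF F2] by auto
    ultimately show "x \<in> A2" unfolding assms(5) using xX by blast
  qed
  have her: "hereditary (X1 \<times> X2) le1 le2 A2"
    unfolding hereditary_def
  proof (intro conjI ballI impI)
    show "A2 \<subseteq> X1 \<times> X2" using assms(5) by auto
  next
    fix x y assume x: "x \<in> A2" and y: "y \<in> X1 \<times> X2" and le: "prod_le le1 le2 y x"
    from x obtain w where w: "w \<in> A1" "le1 (fst x) (fst w)" "le2 (snd x) (snd w)" and xX: "x \<in> X1 \<times> X2"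
      unfolding assms(5) by blast
    have wX: "w \<in> X1 \<times> X2" using w A1X by auto
    have "le1 (fst y) (fst w)" using forest_trans[OF F1, of "fst y" "fst x" "fst w"] le w y xX wX
      unfolding prod_le_def by auto
    moreover have "le2 (snd y) (snd w)" using forest_trans[OF F2, of "snd y" "snd x" "snd w"] le w y xX wX
      unfolding prod_le_def by auto
    ultimately show "y \<in> A2" unfolding assms(5) using y w by blast
  qed
  have conc: "concave le1 le2 A2"
    unfolding concave_def
  proof (intro ballI impI)
    fix t s assume t: "t \<in> A2" and s: "s \<in> A2" and ts: "c_comparable le1 le2 t s"
    from t obtain x where x: "x \<in> A1" "le1 (fst t) (fst x)" "le2 (snd t) (snd x)" and tX: "t \<in> X1 \<times> X2"
      unfolding assms(5) by blast
    from s obtain x' where x': "x' \<in> A1" "le1 (fst s) (fst x')" "le2 (snd s) (snd x')" and sX: "s \<in> X1 \<times> X2"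
      unfolding assms(5) by blast
    from x(1) obtain y z where yz: "y \<in> A" "z \<in> A" "c_comparable le1 le2 y z" "x = cjoin le1 le2 y z"
      unfolding assms(4) by blast
    from x'(1) obtain y' z' where yz': "y' \<in> A" "z' \<in> A" "c_comparable le1 le2 y' z'" "x' = cjoin le1 le2 y' z'"
      unfolding assms(4) by blast
    have XX: "y \<in> X1 \<times> X2" "z \<in> X1 \<times> X2" "y' \<in> X1 \<times> X2" "z' \<in> X1 \<times> X2" "x \<in> X1 \<times> X2" "x' \<in> X1 \<times> X2"
      using yz yz' assms(3) x x' A1X by auto
    have c1: "comparable le1 (fst x) (fst x')"
      using comp_above[OF F1, of "fst t" "fst s" "fst x" "fst x'"] tX sX XX x x' ts
      unfolding c_comparable_def by auto
    have c2: "comparable le2 (snd x) (snd x')"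
      using comp_above[OF F2, of "snd t" "snd s" "snd x" "snd x'"] tX sX XX x x' ts
      unfolding c_comparable_def by auto
    have fx: "fst x = omax le1 (fst y) (fst z)" "fst x' = omax le1 (fst y') (fst z')"
      "snd x = omax le2 (snd y) (snd z)" "snd x' = omax le2 (snd y') (snd z')"
      using yz(4) yz'(4) unfolding cjoin_def by auto
    have cc1: "comparable le1 (fst y) (fst z)" "comparable le1 (fst y') (fst z')"
      using yz(3) yz'(3) unfolding c_comparable_def by auto
    have ex1: "\<exists>m \<in> {fst y, fst z, fst y', fst z'}. le1 (fst y) m \<and> le1 (fst z) m \<and> le1 (fst y') m \<and> le1 (fst z') m
       \<and> le1 (omax le1 (fst y) (fst z)) m \<and> le1 (omax le1 (fst y') (fst z')) m"
      apply (rule top4[OF F1])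
      using XX apply (auto simp: mem_Times_iff)[4]
      using cc1 apply blast
      using cc1 apply blast
      using c1 fx apply simp
      done
    obtain m1 where m1: "m1 \<in> {fst y, fst z, fst y', fst z'}" "le1 (fst y) m1" "le1 (fst z) m1"
      "le1 (fst y') m1" "le1 (fst z') m1" "le1 (fst x) m1" "le1 (fst x') m1"
      using ex1 fx by metis
    have cc2: "comparable le2 (snd y) (snd z)" "comparable le2 (snd y') (snd z')"
      using yz(3) yz'(3) unfolding c_comparable_def by auto
    have ex2: "\<exists>m \<in> {snd y, snd z, snd y', snd z'}. le2 (snd y) m \<and> le2 (snd z) m \<and> le2 (snd y') m \<and> le2 (snd z') m
       \<and> le2 (omax le2 (snd y) (snd z)) m \<and> le2 (omax le2 (snd y') (snd z')) m"
      apply (rule top4[OF F2])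
      using XX apply (auto simp: mem_Times_iff)[4]
      using cc2 apply blast
      using cc2 apply blast
      using c2 fx apply simp
      done
    obtain m2 where m2: "m2 \<in> {snd y, snd z, snd y', snd z'}" "le2 (snd y) m2" "le2 (snd z) m2"
      "le2 (snd y') m2" "le2 (snd z') m2" "le2 (snd x) m2" "le2 (snd x') m2"
      using ex2 fx by metis
    obtain p where p: "p \<in> {y,z,y',z'}" "fst p = m1" using m1(1) by blast
    obtain q where q: "q \<in> {y,z,y',z'}" "snd q = m2" using m2(1) by blast
    have pA: "p \<in> A" "q \<in> A" using p q yz yz' by auto
    have pX: "p \<in> X1 \<times> X2" "q \<in> X1 \<times> X2" using pA assms(3) by auto
    have lq: "le1 (fst q) (fst p)" using q(1) p(2) m1 by auto
    have lp: "le2 (snd p) (snd q)" using p(1) q(2) m2 by auto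
    have pq: "c_comparable le1 le2 p q" using lq lp unfolding c_comparable_def comparable_def by auto
    have j: "cjoin le1 le2 p q = (m1, m2)"
      using omax_same[OF F1, of "fst p" "fst q"] lq pX lp p q unfolding cjoin_def omax_def by auto
    have mX: "m1 \<in> X1" "m2 \<in> X2" using pX p(2) q(2) by (auto simp: mem_Times_iff)
    have jA1: "(m1, m2) \<in> A1" unfolding assms(4)
    proof (intro CollectI conjI)
      show "(m1, m2) \<in> X1 \<times> X2" using mX by simp
      show "\<exists>y\<in>A. \<exists>z\<in>A. c_comparable le1 le2 y z \<and> (m1, m2) = cjoin le1 le2 y z"
        using pA pq j by metis
    qed
    let ?u = "cjoin le1 le2 t s"
    have u1: "fst ?u \<in> {fst t, fst s}" "snd ?u \<in> {snd t, snd s}"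
      unfolding cjoin_def using omax_cases[of le1 "fst t" "fst s"] omax_cases[of le2 "snd t" "snd s"] by auto
    have uX: "?u \<in> X1 \<times> X2" using u1 tX sX by (auto simp: mem_Times_iff)
    have "le1 (fst t) m1" using forest_trans[OF F1, of "fst t" "fst x" m1] x tX XX mX m1 by auto
    moreover have "le1 (fst s) m1" using forest_trans[OF F1, of "fst s" "fst x'" m1] x' sX XX mX m1 by auto
    ultimately have "le1 (fst ?u) m1" using u1 by auto
    moreover have "le2 (snd t) m2" using forest_trans[OF F2, of "snd t" "snd x" m2] x tX XX mX m2 by auto
    moreover have "le2 (snd s) m2" using forest_trans[OF F2, of "snd s" "snd x'" m2] x' sX XX mX m2 by auto
    ultimately have "le2 (snd ?u) m2" "le1 (fst ?u) m1" using u1 by auto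
    then show "?u \<in> A2" unfolding assms(5) using uX jA1 by force
  qed
  show "ch_envelope (X1 \<times> X2) le1 le2 A \<subseteq> A2"
    unfolding ch_envelope_def
  proof (rule Inter_lower, intro CollectI conjI)
    show "A2 \<subseteq> X1 \<times> X2" using her unfolding hereditary_def by blast
    show "hereditary (X1 \<times> X2) le1 le2 A2" by (rule her)
    show "concave le1 le2 A2" by (rule conc)
    show "A \<subseteq> A2" by (rule AA2)
  qed
qed

end
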